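(* Let $N\ge2$ and let $(\vartheta_i(t))_{i=1}^N$, $t\ge0$, $\vartheta_i(t)\in\mathbb R$, be a solution of $$\dot\vartheta_i(t)=-\frac1N\sum_{j=1}^N\sin(\vartheta_i(t)-\vartheta_j(t)),\qquad i=1,\dots,N,$$ which is not a stationary solution. Then each $\vartheta_j(t)$ converges to a finite limit $\vartheta_j^*$ as $t\to\infty$, and $(\vartheta_j^* )_{j=1}^N$ is a stationary configuration of type $(N-k,k)$ for some integer $0\le k<N/2$ (complete frequency synchronization). Moreover, if $\vartheta_i(0)\neq\vartheta_j(0)\pmod{2\pi}$ for all $i\neq j$, then the limit configuration is of type $(N,0)$ or $(N-1,1)$, i.e. $k\in\{0,1\}$.
   Context: The order parameters are defined by $R e^{\mathrm{i}\varphi}=\frac1N\sum_{j}e^{\mathrm{i}\vartheta_j}$. A stationary solution is a solution constant in time (mod $2\pi$). A configuration $(\vartheta_j^* )_{j=1}^N$ is of type $(N-k,k)$, $0\le k<N/2$, if there exist $\varphi^*\in\mathbb R$ and $I\subseteq\{1,\dots,N\}$ with $|I|=N-k$ such that $\vartheta_i^*=\varphi^*\pmod{2\pi}$ for $i\in I$ and $\vartheta_i^*=\varphi^*+\pi\pmod{2\pi}$ for $i\notin I$. Type $(N,0)$ is complete phase synchronization. *)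

theory Defs
  imports "HOL-Analysis.Analysis"
begin

definition cong_2pi :: "real \<Rightarrow> real \<Rightarrow> bool" where
  "cong_2pi x y \<longleftrightarrow> (\<exists>m::int. x - y = 2 * pi * of_int m)"

definition kuramoto_rhs :: "nat \<Rightarrow> (nat \<Rightarrow> real) \<Rightarrow> nat \<Rightarrow> real" where
  "kuramoto_rhs N x i = - (1 / real N) * (\<Sum>j<N. sin (x i - x j))"

definition is_solution :: "nat \<Rightarrow> (real \<Rightarrow> nat \<Rightarrow> real) \<Rightarrow> bool" where
  "is_solution N theta \<longleftrightarrow>
     (\<forall>i<N. \<forall>t\<ge>0. ((\<lambda>s. theta s i) has_real_derivative kuramoto_rhs N (theta t) i)
                      (at t within {0..}))"

definition is_stationary_solution :: "nat \<Rightarrow> (real \<Rightarrow> nat \<Rightarrow> real) \<Rightarrow> bool" where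
  "is_stationary_solution N theta \<longleftrightarrow>
     (\<forall>i<N. \<forall>t\<ge>0. cong_2pi (theta t i) (theta 0 i))"

definition config_type :: "nat \<Rightarrow> nat \<Rightarrow> (nat \<Rightarrow> real) \<Rightarrow> bool" where
  "config_type N k x \<longleftrightarrow>
     (\<exists>phi::real. \<exists>I. I \<subseteq> {..<N} \<and> card I = N - k \<and>
        (\<forall>i\<in>I. cong_2pi (x i) phi) \<and>
        (\<forall>i\<in>{..<N} - I. cong_2pi (x i) (phi + pi)))"

end

theory Submission
  imports Defs
begin

definition cC :: "nat \<Rightarrow> (nat \<Rightarrow> real) \<Rightarrow> real" where
  "cC N x = (\<Sum>j<N. cos (x j)) / real N"
definition sS :: "nat \<Rightarrow> (nat \<Rightarrow> real) \<Rightarrow> real" where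
  "sS N x = (\<Sum>j<N. sin (x j)) / real N"

lemma rhs_eq: "kuramoto_rhs N x i = sS N x * cos (x i) - cC N x * sin (x i)"
proof -
  have h: "(\<Sum>j<N. sin (x i - x j)) = sin (x i) * (\<Sum>j<N. cos (x j)) - cos (x i) * (\<Sum>j<N. sin (x j))"
    by (simp add: sin_diff sum_subtractf sum_distrib_left)
  show ?thesis unfolding kuramoto_rhs_def h cC_def sS_def by (simp add: divide_inverse algebra_simps)
qed

lemma sq_sum_le: fixes x :: "nat \<Rightarrow> real"
  shows "(\<Sum>j<N. cos (x j))^2 + (\<Sum>j<N. sin (x j))^2 \<le> (real N)^2"
proof -
  have "(\<Sum>j<N. cos (x j))^2 + (\<Sum>j<N. sin (x j))^2 = (\<Sum>j<N. \<Sum>k<N. cos (x j - x k))"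
    by (simp add: power2_eq_square sum_product cos_diff sum.distrib[symmetric])
  also have "\<dots> \<le> (\<Sum>j<N. \<Sum>k<N. (1::real))"
    by (intro sum_mono) auto
  finally show ?thesis by (simp add: power2_eq_square)
qed

lemma F_le1: "(cC N x)^2 + (sS N x)^2 \<le> 1"
proof (cases "N = 0")
  case True then show ?thesis by (simp add: cC_def sS_def)
next
  case False
  have "(cC N x)^2 + (sS N x)^2 = ((\<Sum>j<N. cos (x j))^2 + (\<Sum>j<N. sin (x j))^2) / (real N)^2"
    by (simp add: cC_def sS_def power_divide add_divide_distrib)
  also have "\<dots> \<le> 1" using sq_sum_le[of x N] False by (simp add: divide_le_eq)
  finally show ?thesis .
qed

lemma abs_cC: "\<bar>cC N x\<bar> \<le> 1"
proof -
  have "(cC N x)^2 \<le> 1" using F_le1[of N x] zero_le_power2[of "sS N x"] by linarith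
  then show ?thesis by (simp add: abs_square_le_1)
qed

lemma abs_sS: "\<bar>sS N x\<bar> \<le> 1"
proof -
  have "(sS N x)^2 \<le> 1" using F_le1[of N x] zero_le_power2[of "cC N x"] by linarith
  then show ?thesis by (simp add: abs_square_le_1)
qed

lemma g_v_id: "(C * cos a + S * sin a)^2 + (S * cos a - C * sin a)^2 = C^2 + S^2" for C S a :: real
proof -
  have "(C * cos a + S * sin a)^2 + (S * cos a - C * sin a)^2 = (C^2 + S^2) * ((sin a)^2 + (cos a)^2)"
    by (simp add: power2_eq_square ring_distribs mult.commute mult.left_commute)
  then show ?thesis by simp
qed

lemma sum_g: "N > 0 \<Longrightarrow> (\<Sum>j<N. cC N x * cos (x j) + sS N x * sin (x j)) = real N * ((cC N x)^2 + (sS N x)^2)"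
proof -
  assume N: "N > 0"
  have "(\<Sum>j<N. cC N x * cos (x j) + sS N x * sin (x j))
    = cC N x * (\<Sum>j<N. cos (x j)) + sS N x * (\<Sum>j<N. sin (x j))"
    by (simp add: sum.distrib sum_distrib_left)
  also have "\<dots> = real N * ((cC N x)^2 + (sS N x)^2)"
    using N by (simp add: cC_def sS_def field_simps power2_eq_square)
  finally show ?thesis .
qed

lemma mono_bdd_le:
  fixes f :: "real \<Rightarrow> real"
  assumes bdd: "\<And>t. T \<le> t \<Longrightarrow> f t \<le> B" and t: "T \<le> t"
  shows "f t \<le> (SUP t\<in>{T..}. f t)"
proof -
  have "bdd_above (f ` {T..})" using bdd by (auto intro!: bdd_aboveI)
  then show ?thesis using t by (intro cSUP_upper) auto
qed

lemma mono_bdd_tendsto: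
  fixes f :: "real \<Rightarrow> real"
  assumes mono: "\<And>s t. T \<le> s \<Longrightarrow> s \<le> t \<Longrightarrow> f s \<le> f t" and bdd: "\<And>t. T \<le> t \<Longrightarrow> f t \<le> B"
  shows "(f \<longlongrightarrow> (SUP t\<in>{T..}. f t)) at_top"
proof (rule tendstoI)
  fix e :: real assume e: "e > 0"
  let ?L = "SUP t\<in>{T..}. f t"
  have ba: "bdd_above (f ` {T..})" using bdd by (auto intro!: bdd_aboveI)
  have "?L - e < ?L" using e by simp
  then obtain t0 where t0: "t0 \<in> {T..}" "?L - e < f t0"
    using less_cSUP_iff[OF _ ba, of "?L - e"] by auto
  show "\<forall>\<^sub>F t in at_top. dist (f t) ?L < e"
    using eventually_ge_at_top[of t0]
  proof eventually_elim
    case (elim t)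
    have "f t0 \<le> f t" using mono t0 elim by auto
    moreover have "f t \<le> ?L" by (rule mono_bdd_le[OF bdd]) (use t0 elim in auto)
    ultimately show ?case using t0 by (simp add: dist_real_def abs_if)
  qed
qed

lemma deriv_mono:
  fixes f :: "real \<Rightarrow> real"
  assumes "0 \<le> a" "a \<le> b" "continuous_on {0..} f"
    and "\<And>t. 0 < t \<Longrightarrow> (f has_real_derivative f' t) (at t)" "\<And>t. 0 < t \<Longrightarrow> f' t \<ge> 0"
  shows "f a \<le> f b"
proof (rule DERIV_nonneg_imp_increasing_open[OF assms(2)])
  show "continuous_on {a..b} f" by (rule continuous_on_subset[OF assms(3)]) (use assms(1) in auto)
  fix x assume "a < x" "x < b"
  then show "\<exists>y. (f has_real_derivative y) (at x) \<and> y \<ge> 0" using assms by (intro exI[of _ "f' x"]) auto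
qed



locale kur =
  fixes N :: nat and theta :: "real \<Rightarrow> nat \<Rightarrow> real"
  assumes sol: "is_solution N theta" and N2: "N \<ge> 2"
begin

abbreviation "Ct t \<equiv> cC N (theta t)"
abbreviation "St t \<equiv> sS N (theta t)"
abbreviation "vv t j \<equiv> kuramoto_rhs N (theta t) j"
abbreviation "Ff t \<equiv> (Ct t)^2 + (St t)^2"
abbreviation "Ee t \<equiv> (\<Sum>j<N. (vv t j)^2)"

lemma dth: "j < N \<Longrightarrow> 0 < t \<Longrightarrow> ((\<lambda>s. theta s j) has_real_derivative vv t j) (at t)"
proof -
  assume j: "j < N" and t: "0 < t"
  have "((\<lambda>s. theta s j) has_real_derivative vv t j) (at t within {0..})"
    using sol j t unfolding is_solution_def by auto
  moreover have "at t within {0..} = at t"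
    using t by (intro at_within_interior) (simp add: interior_Ici[of "-1"])
  ultimately show ?thesis by simp
qed

lemma cth: "j < N \<Longrightarrow> continuous_on {0..} (\<lambda>s. theta s j)"
  using sol unfolding is_solution_def by (intro DERIV_continuous_on) auto

lemma dC: "0 < t \<Longrightarrow> (Ct has_real_derivative - (\<Sum>j<N. sin (theta t j) * vv t j) / N) (at t)"
  unfolding cC_def
  using N2 by (auto intro!: derivative_eq_intros dth simp: sum_negf)

lemma dS: "0 < t \<Longrightarrow> (St has_real_derivative (\<Sum>j<N. cos (theta t j) * vv t j) / N) (at t)"
  unfolding sS_def
  using N2 by (auto intro!: derivative_eq_intros dth)

lemma dF: "0 < t \<Longrightarrow> (Ff has_real_derivative 2 / N * Ee t) (at t)"
proof -
  assume t: "0 < t"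
  have "(Ff has_real_derivative 2 * Ct t * (- (\<Sum>j<N. sin (theta t j) * vv t j) / N)
         + 2 * St t * ((\<Sum>j<N. cos (theta t j) * vv t j) / N)) (at t)"
  proof -
    have a: "((\<lambda>s. (Ct s)^2) has_real_derivative of_nat 2 * ((- (\<Sum>j<N. sin (theta t j) * vv t j) / N) * (Ct t)^(2 - Suc 0))) (at t)"
      by (rule DERIV_power[OF dC[OF t]])
    have b: "((\<lambda>s. (St s)^2) has_real_derivative of_nat 2 * (((\<Sum>j<N. cos (theta t j) * vv t j) / N) * (St t)^(2 - Suc 0))) (at t)"
      by (rule DERIV_power[OF dS[OF t]])
    from DERIV_add[OF a b] show ?thesis by (simp add: algebra_simps)
  qed
  moreover have "2 * Ct t * (- (\<Sum>j<N. sin (theta t j) * vv t j) / N)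
         + 2 * St t * ((\<Sum>j<N. cos (theta t j) * vv t j) / N) = 2 / N * Ee t"
  proof -
    have "(\<Sum>j<N. (vv t j)^2) = (\<Sum>j<N. vv t j * (St t * cos (theta t j) - Ct t * sin (theta t j)))"
      by (intro sum.cong refl) (simp add: rhs_eq[symmetric] power2_eq_square)
    also have "\<dots> = St t * (\<Sum>j<N. cos (theta t j) * vv t j) - Ct t * (\<Sum>j<N. sin (theta t j) * vv t j)"
      by (simp add: sum_distrib_left sum_subtractf algebra_simps)
    finally have h: "Ee t = St t * (\<Sum>j<N. cos (theta t j) * vv t j) - Ct t * (\<Sum>j<N. sin (theta t j) * vv t j)" .
    show ?thesis unfolding h by (simp add: divide_inverse algebra_simps)
  qed
  ultimately show ?thesis by simp
qed


lemma contC: "continuous_on {0..} Ct"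
  unfolding cC_def
  by (intro continuous_on_divide continuous_on_sum continuous_on_cos cth continuous_on_const) (use N2 in auto)
lemma contS: "continuous_on {0..} St"
  unfolding sS_def
  by (intro continuous_on_divide continuous_on_sum continuous_on_sin cth continuous_on_const) (use N2 in auto)
lemma contF: "continuous_on {0..} Ff"
  by (intro continuous_on_add continuous_on_power contC contS)

lemma Ee_nonneg: "0 \<le> Ee t" by (intro sum_nonneg) auto

lemma F_mono: "0 \<le> s \<Longrightarrow> s \<le> t \<Longrightarrow> Ff s \<le> Ff t"
  by (rule deriv_mono[where f'="\<lambda>t. 2 / N * Ee t", OF _ _ contF dF]) (auto intro!: divide_nonneg_nonneg mult_nonneg_nonneg sum_nonneg)

lemma const_th:
  assumes j: "j < N" and z: "\<And>t. 0 < t \<Longrightarrow> vv t j = 0" and t: "0 \<le> t"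
  shows "theta t j = theta 0 j"
proof -
  have d: "((\<lambda>s. theta s j) has_real_derivative 0) (at s)" if "0 < s" for s
    using dth[OF j that] z[OF that] by simp
  have d2: "((\<lambda>s. - theta s j) has_real_derivative - 0) (at s)" if "0 < s" for s
    using DERIV_minus[OF d[OF that]] .
  have "theta 0 j \<le> theta t j"
    by (rule deriv_mono[where f'="\<lambda>_. 0", OF _ t cth[OF j] d]) auto
  moreover have "- theta 0 j \<le> - theta t j"
    by (rule deriv_mono[where f'="\<lambda>_. - 0", OF _ t _ d2]) (auto intro!: continuous_on_minus cth[OF j])
  ultimately show ?thesis by simp
qed

lemma exT:
  assumes ns: "\<not> is_stationary_solution N theta"
  shows "\<exists>T>0. Ff T > 0"
proof (rule ccontr)
  assume "\<not> (\<exists>T>0. Ff T > 0)"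
  then have F0: "Ff t = 0" if "0 < t" for t
  proof -
    have "Ff t \<ge> 0" by simp
    moreover have "\<not> Ff t > 0" using \<open>\<not> (\<exists>T>0. Ff T > 0)\<close> that by blast
    ultimately show ?thesis by linarith
  qed
  have z: "vv t j = 0" if "0 < t" for t j
  proof -
    have "Ct t = 0" "St t = 0" using F0[OF that] by (simp_all add: add_nonneg_eq_0_iff)
    then show ?thesis by (simp add: rhs_eq)
  qed
  have "is_stationary_solution N theta"
    unfolding is_stationary_solution_def
  proof (intro allI impI)
    fix i t assume i: "i < N" and t: "0 \<le> (t::real)"
    have "theta t i = theta 0 i" by (rule const_th[OF i z t])
    then show "cong_2pi (theta t i) (theta 0 i)" unfolding cong_2pi_def by (intro exI[of _ 0]) simp
  qed
  with ns show False by simp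
qed
end

lemma key_pointwise:
  fixes x :: "nat \<Rightarrow> real"
  assumes N: "N > 0" and F: "(cC N x)^2 + (sS N x)^2 > 0"
  shows "\<bar>sqrt ((cC N x)^2 + (sS N x)^2) - (2 * real (card {j. j < N \<and> cC N x * cos (x j) + sS N x * sin (x j) \<ge> 0}) - real N) / real N\<bar>
    \<le> (\<Sum>j<N. (kuramoto_rhs N x j)^2) / (real N * ((cC N x)^2 + (sS N x)^2))"
proof -
  define C where "C = cC N x"
  define S where "S = sS N x"
  define FF where "FF = C^2 + S^2"
  define R where "R = sqrt FF"
  define g where "g j = C * cos (x j) + S * sin (x j)" for j
  define v where "v j = kuramoto_rhs N x j" for j
  define P where "P = {j. j < N \<and> g j \<ge> 0}"
  define \<sigma> where "\<sigma> j = (if g j \<ge> 0 then 1 else -1::real)" for j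
  have FF0: "FF > 0" using F by (simp add: FF_def C_def S_def)
  have R0: "R > 0" using FF0 by (simp add: R_def)
  have RR: "R^2 = FF" using FF0 by (simp add: R_def)
  have gv: "(g j)^2 + (v j)^2 = FF" for j
    unfolding g_def v_def FF_def rhs_eq C_def S_def by (rule g_v_id)
  have sumg: "(\<Sum>j<N. g j) = real N * FF"
    unfolding g_def FF_def C_def S_def using sum_g[OF N] .
  have Pfin: "finite P" "P \<subseteq> {..<N}" by (auto simp: P_def)
  have sumsig: "(\<Sum>j<N. \<sigma> j) = 2 * real (card P) - real N"
  proof -
    have "(\<Sum>j<N. \<sigma> j) = (\<Sum>j\<in>P. \<sigma> j) + (\<Sum>j\<in>{..<N} - P. \<sigma> j)"
      using Pfin by (metis add.commute finite_lessThan sum.subset_diff)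
    also have "(\<Sum>j\<in>P. \<sigma> j) = real (card P)" by (simp add: \<sigma>_def P_def)
    also have "(\<Sum>j\<in>{..<N} - P. \<sigma> j) = - real (card ({..<N} - P))" by (simp add: \<sigma>_def P_def)
    also have "card ({..<N} - P) = N - card P" using Pfin by (simp add: card_Diff_subset)
    also have "real (N - card P) = real N - real (card P)"
      using Pfin card_mono[OF _ Pfin(2)] by (simp add: of_nat_diff)
    finally show ?thesis by simp
  qed
  have each: "\<bar>g j - R * \<sigma> j\<bar> \<le> (v j)^2 / R" for j
  proof -
    have ag: "\<bar>g j\<bar> \<le> R"
      using gv[of j] RR R0 by (metis abs_le_square_iff abs_of_pos le_add_same_cancel1 zero_le_power2)
    have "\<bar>g j - R * \<sigma> j\<bar> = R - \<bar>g j\<bar>" using ag by (auto simp: \<sigma>_def)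
    moreover have "(R - \<bar>g j\<bar>) * R \<le> (v j)^2"
    proof -
      have "(R - \<bar>g j\<bar>) * R \<le> (R - \<bar>g j\<bar>) * (R + \<bar>g j\<bar>)" using ag by (intro mult_left_mono) auto
      also have "\<dots> = R^2 - (g j)^2" by (simp add: power2_eq_square algebra_simps)
      finally show ?thesis using gv[of j] RR by simp
    qed
    ultimately show ?thesis using R0 by (simp add: pos_le_divide_eq)
  qed
  have "\<bar>real N * FF - R * (\<Sum>j<N. \<sigma> j)\<bar> = \<bar>\<Sum>j<N. g j - R * \<sigma> j\<bar>"
    by (simp add: sumg sum_subtractf sum_distrib_left)
  also have "\<dots> \<le> (\<Sum>j<N. \<bar>g j - R * \<sigma> j\<bar>)" by (rule sum_abs)
  also have "\<dots> \<le> (\<Sum>j<N. (v j)^2 / R)" by (intro sum_mono each)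
  also have "\<dots> = (\<Sum>j<N. (v j)^2) / R" by (simp add: sum_divide_distrib)
  finally have A: "\<bar>real N * FF - R * (\<Sum>j<N. \<sigma> j)\<bar> \<le> (\<Sum>j<N. (v j)^2) / R" .
  have "real N * FF - R * (\<Sum>j<N. \<sigma> j) = (real N * R) * (R - (\<Sum>j<N. \<sigma> j) / real N)"
    using N RR by (simp add: field_simps power2_eq_square)
  with A have "(real N * R) * \<bar>R - (\<Sum>j<N. \<sigma> j) / real N\<bar> \<le> (\<Sum>j<N. (v j)^2) / R"
    using N R0 by (simp add: abs_mult)
  then have "\<bar>R - (\<Sum>j<N. \<sigma> j) / real N\<bar> \<le> (\<Sum>j<N. (v j)^2) / R / (real N * R)"
    using N R0 by (simp add: field_simps)
  also have "\<dots> = (\<Sum>j<N. (v j)^2) / (real N * FF)"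
    using RR by (simp add: power2_eq_square field_simps)
  finally show ?thesis
    by (simp add: sumsig R_def FF_def C_def S_def P_def g_def v_def)
qed


context kur begin

definition "Finf = (SUP t\<in>{0..}. Ff t)"

lemma F_le_inf: "0 \<le> t \<Longrightarrow> Ff t \<le> Finf"
  unfolding Finf_def by (rule mono_bdd_le[where B=1]) (auto intro: F_le1)

lemma F_tend: "(Ff \<longlongrightarrow> Finf) at_top"
  unfolding Finf_def by (rule mono_bdd_tendsto[where B=1]) (auto intro: F_mono F_le1)

lemma Finf_le1: "Finf \<le> 1"
  unfolding Finf_def by (rule cSUP_least) (auto intro: F_le1)

end

locale kur2 = kur +
  assumes ns: "\<not> is_stationary_solution N theta"
begin

definition "T0 = (SOME T. T > 0 \<and> Ff T > 0)"

lemma T0: "T0 > 0" "Ff T0 > 0"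
  using someI_ex[OF exT[OF ns]] unfolding T0_def by auto

lemma Fpos: "T0 \<le> t \<Longrightarrow> Ff T0 \<le> Ff t"
  using T0 by (intro F_mono) auto

definition "Lam = (\<lambda>m. (2 * real m - real N) / real N) ` {..N}"
definition "Lm = {l \<in> Lam. l < sqrt Finf}"
definition "eta = Min (insert 1 ((\<lambda>l. (sqrt Finf - l) / 2) ` Lm))"

lemma Lm_fin: "finite Lm" unfolding Lm_def Lam_def by auto

lemma eta: "eta > 0" "eta \<le> 1" "\<And>l. l \<in> Lm \<Longrightarrow> eta \<le> (sqrt Finf - l) / 2"
proof -
  have fin: "finite (insert 1 ((\<lambda>l. (sqrt Finf - l) / 2) ` Lm))" using Lm_fin by auto
  show "eta > 0" unfolding eta_def using fin by (subst Min_gr_iff) (auto simp: Lm_def)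
  show "eta \<le> 1" unfolding eta_def using fin by (intro Min_le) auto
  fix l assume "l \<in> Lm"
  then show "eta \<le> (sqrt Finf - l) / 2" unfolding eta_def using fin by (intro Min_le) auto
qed

lemma ev_above: "\<forall>\<^sub>F t in at_top. \<forall>l\<in>Lm. (l + sqrt Finf) / 2 < sqrt (Ff t)"
proof (rule eventually_ball_finite[OF Lm_fin], rule ballI)
  fix l assume "l \<in> Lm"
  then have "(l + sqrt Finf) / 2 < sqrt Finf" by (simp add: Lm_def)
  moreover have "((\<lambda>t. sqrt (Ff t)) \<longlongrightarrow> sqrt Finf) at_top"
    by (intro tendsto_real_sqrt F_tend)
  ultimately show "\<forall>\<^sub>F t in at_top. (l + sqrt Finf) / 2 < sqrt (Ff t)"
    by (rule order_tendstoD(1)[rotated])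
qed

lemma loj: "\<exists>K>0. \<exists>T1\<ge>T0. \<forall>t\<ge>T1. Finf - Ff t \<le> K * Ee t"
proof -
  obtain T1' where T1': "\<And>t. t \<ge> T1' \<Longrightarrow> \<forall>l\<in>Lm. (l + sqrt Finf) / 2 < sqrt (Ff t)"
    using ev_above unfolding eventually_at_top_linorder by auto
  define T1 where "T1 = max T1' T0"
  define d0 where "d0 = Ff T0"
  have d0: "d0 > 0" using T0 by (simp add: d0_def)
  have N0: "real N > 0" using N2 by simp
  define K where "K = 2 / (real N * d0 * eta)"
  have K: "K > 0" using d0 eta N0 by (simp add: K_def)
  have "\<forall>t\<ge>T1. Finf - Ff t \<le> K * Ee t"
  proof (intro allI impI)
    fix t assume t: "T1 \<le> t"
    have tT0: "T0 \<le> t" and tT1': "T1' \<le> t" using t by (auto simp: T1_def)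
    have t0: "0 \<le> t" using tT0 T0 by simp
    define F where "F = Ff t"
    define R where "R = sqrt F"
    define E where "E = Ee t"
    define L where "L = (2 * real (card {j. j < N \<and> Ct t * cos (theta t j) + St t * sin (theta t j) \<ge> 0}) - real N) / real N"
    have Fd0: "d0 \<le> F" using Fpos[OF tT0] by (simp add: F_def d0_def)
    have FF: "F \<le> Finf" using F_le_inf[OF t0] by (simp add: F_def)
    have E0: "0 \<le> E" unfolding E_def by (rule Ee_nonneg)
    have Rle: "R \<le> sqrt Finf" using FF Fd0 d0 by (simp add: R_def)
    have R0: "0 \<le> R" using Fd0 d0 by (simp add: R_def)
    have Rinf1: "sqrt Finf \<le> 1" using Finf_le1 by simp
    have LLam: "L \<in> Lam"
    proof -
      have "card {j. j < N \<and> Ct t * cos (theta t j) + St t * sin (theta t j) \<ge> 0} \<le> N"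
        using card_mono[of "{..<N}" "{j. j < N \<and> Ct t * cos (theta t j) + St t * sin (theta t j) \<ge> 0}"] by auto
      then show ?thesis unfolding Lam_def L_def by auto
    qed
    have key: "\<bar>R - L\<bar> \<le> E / (real N * F)"
      using key_pointwise[of N "theta t"] N2 d0 Fd0
      unfolding R_def L_def E_def F_def by simp
    have "E / (real N * F) \<le> E / (real N * d0)"
      using Fd0 d0 N0 E0 by (intro divide_left_mono mult_left_mono mult_pos_pos) auto
    with key have key2: "\<bar>R - L\<bar> \<le> E / (real N * d0)" by linarith
    have Ebnd: "E / (real N * d0) \<le> E / (real N * d0 * eta)"
      using eta d0 N0 E0 by (intro divide_left_mono) (auto simp: mult_le_cancel_left1)
    have D: "sqrt Finf - R \<le> E / (real N * d0 * eta)"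
    proof (cases "E \<ge> real N * d0 * eta")
      case True
      then have "1 \<le> E / (real N * d0 * eta)" using eta d0 N0 by (simp add: le_divide_eq)
      then show ?thesis using Rinf1 R0 by linarith
    next
      case False
      then have "E / (real N * d0) < eta" using eta d0 N0 by (simp add: divide_less_eq mult.assoc mult.commute)
      with key2 have close: "\<bar>R - L\<bar> < eta" by linarith
      have "L \<ge> sqrt Finf"
      proof (rule ccontr)
        assume "\<not> L \<ge> sqrt Finf"
        then have "L \<in> Lm" using LLam by (simp add: Lm_def)
        then have "(L + sqrt Finf) / 2 < R" "eta \<le> (sqrt Finf - L) / 2"
          using T1'[OF tT1'] eta(3) by (auto simp: R_def F_def)
        moreover have "R - L < eta" using close by (simp add: abs_less_iff)
        ultimately show False by argo
      qed
      moreover have "L - R \<le> E / (real N * d0)" using key2 by (simp add: abs_le_iff)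
      ultimately show ?thesis using Ebnd by linarith
    qed
    have "Finf - F = (sqrt Finf - R) * (sqrt Finf + R)"
      using FF d0 Fd0 by (simp add: R_def algebra_simps power2_eq_square[symmetric] )
    also have "\<dots> \<le> (sqrt Finf - R) * 2"
      using Rle R0 Rinf1 by (intro mult_left_mono) linarith+
    also have "\<dots> \<le> E / (real N * d0 * eta) * 2" using D by (intro mult_right_mono) auto
    also have "\<dots> = K * E" by (simp add: K_def)
    finally show "Finf - Ff t \<le> K * Ee t" by (simp add: F_def E_def)
  qed
  moreover have "T1 \<ge> T0" by (simp add: T1_def)
  ultimately show ?thesis using K by blast
qed

end

lemma bnd_aux:
  fixes G K E v :: real
  assumes G: "G > 0" and GK: "G^2 \<le> K * E" and vE: "v^2 \<le> E" and K: "K > 0" and N: "n > 0"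
  shows "\<bar>v\<bar> \<le> (n * (K + 1)) * E / (n * G)"
proof -
  have E0: "E \<ge> 0" using vE zero_le_power2[of v] by linarith
  have A: "(\<bar>v\<bar> * G)^2 \<le> ((K + 1) * E)^2"
  proof -
    have "(\<bar>v\<bar> * G)^2 = v^2 * G^2" by (simp add: power_mult_distrib)
    also have "\<dots> \<le> E * (K * E)" using vE GK E0 by (intro mult_mono) auto
    also have "\<dots> \<le> ((K + 1) * E)^2"
    proof -
      have eq: "((K + 1) * E)^2 = E * (K * E) + (K^2 + K + 1) * E^2" by (simp add: power2_eq_square algebra_simps)
      have "K^2 + K + 1 \<ge> 0" using K by (simp add: add_nonneg_nonneg)
      then have "(K^2 + K + 1) * E^2 \<ge> 0" by (rule mult_nonneg_nonneg) simp
      then show ?thesis unfolding eq by linarith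
    qed
    finally show ?thesis .
  qed
  have KE: "0 \<le> (K + 1) * E" using K E0 by (intro mult_nonneg_nonneg) auto
  have "\<bar>v\<bar> * G \<le> (K + 1) * E" by (rule power2_le_imp_le[OF A KE])
  then have B: "\<bar>v\<bar> \<le> (K + 1) * E / G" using G by (simp add: pos_le_divide_eq)
  have "(n * (K + 1)) * E / (n * G) = n * ((K + 1) * E) / (n * G)" by (simp only: mult.assoc)
  also have "\<dots> = (K + 1) * E / G" by (rule mult_divide_mult_cancel_left) (use N in simp)
  finally show ?thesis using B by simp
qed

context kur2 begin

lemma conv: assumes j: "j < N" shows "\<exists>L. ((\<lambda>t. theta t j) \<longlongrightarrow> L) at_top"
proof -
  from loj obtain K T1 where K: "K > 0" and T1: "T1 \<ge> T0" and lojK: "\<forall>t\<ge>T1. Finf - Ff t \<le> K * Ee t"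
    by blast
  have loj: "Finf - Ff t \<le> K * Ee t" if "t \<ge> T1" for t using lojK that by simp
  have T1p: "T1 > 0" using T1 T0 by simp
  have N0: "real N > 0" using N2 by simp
  show ?thesis
  proof (cases "\<exists>t1\<ge>T1. Ff t1 = Finf")
    case True
    then obtain t1 where t1: "t1 \<ge> T1" "Ff t1 = Finf" by blast
    have E0: "Ee t = 0" if "t > t1" for t
    proof -
      have "2 / real N * Ee t = 0"
      proof (rule DERIV_local_max[OF dF[of t]])
        show "0 < t" using that t1 T1p by simp
        show "0 < t - t1" using that by simp
        show "\<forall>y. \<bar>t - y\<bar> < t - t1 \<longrightarrow> Ff y \<le> Ff t"
        proof (intro allI impI)
          fix y assume "\<bar>t - y\<bar> < t - t1"
          then have "y \<ge> 0" using t1 T1p by auto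
          then have "Ff y \<le> Finf" by (rule F_le_inf)
          moreover have "Ff t1 \<le> Ff t" using that t1 T1p by (intro F_mono) auto
          ultimately show "Ff y \<le> Ff t" using t1 by simp
        qed
      qed
      then show ?thesis using N0 by simp
    qed
    have v0: "vv t j = 0" if "t > t1" for t
    proof -
      have "\<forall>i\<in>{..<N}. (vv t i)^2 = 0" using E0[OF that] by (subst (asm) sum_nonneg_eq_0_iff) auto
      then show ?thesis using j by simp
    qed
    have cst: "theta t j = theta t1 j" if "t \<ge> t1" for t
    proof -
      have d: "((\<lambda>s. theta s j) has_real_derivative 0) (at s)" if "t1 < s" for s
        using dth[OF j, of s] v0[OF that] that t1 T1p by simp
      have d2: "((\<lambda>s. - theta s j) has_real_derivative - 0) (at s)" if "t1 < s" for s
        using DERIV_minus[OF d[OF that]] .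
      have c: "continuous_on {t1..t} (\<lambda>s. theta s j)"
        by (rule continuous_on_subset[OF cth[OF j]]) (use t1 T1p in auto)
      have "theta t1 j \<le> theta t j"
        by (rule DERIV_nonneg_imp_increasing_open[OF that _ c]) (use d in \<open>blast intro: order_refl\<close>)
      moreover have "- theta t1 j \<le> - theta t j"
        by (rule DERIV_nonneg_imp_increasing_open[OF that _ continuous_on_minus[OF c]]) (use d2 in \<open>force\<close>)
      ultimately show ?thesis by simp
    qed
    have "((\<lambda>t. theta t j) \<longlongrightarrow> theta t1 j) at_top"
      by (rule tendsto_eventually, rule eventually_mono[OF eventually_ge_at_top[of t1]]) (rule cst)
    then show ?thesis by blast
  next
    case False
    then have Flt: "Ff t < Finf" if "t \<ge> T1" for t
      using that F_le_inf[of t] T1p by force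
    define G where "G t = sqrt (Finf - Ff t)" for t
    define c where "c = real N * (K + 1)"
    have Gpos: "G t > 0" if "t \<ge> T1" for t using Flt[OF that] by (simp add: G_def)
    have dG: "(G has_real_derivative inverse (sqrt (Finf - Ff t)) / 2 * (0 - 2 / real N * Ee t)) (at t)"
      if "t > T1" for t
      unfolding G_def
      by (rule DERIV_chain2[OF DERIV_real_sqrt DERIV_diff[OF DERIV_const dF]]) (use Flt that T1p in auto)
    have dG': "inverse (sqrt (Finf - Ff t)) / 2 * (0 - 2 / real N * Ee t) = - (Ee t / (real N * G t))"
      for t by (simp add: G_def field_simps)
    have vb: "\<bar>vv t j\<bar> \<le> c * Ee t / (real N * G t)" if "t > T1" for t
    proof (rule bnd_aux[of "G t" K "Ee t" "vv t j" "real N", unfolded c_def[symmetric]])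
      show "G t > 0" using Gpos that by simp
      show "(G t)^2 \<le> K * Ee t" using loj[of t] Flt[of t] that by (simp add: G_def)
      show "(vv t j)^2 \<le> Ee t" using j by (intro member_le_sum) auto
    qed (use K N0 in auto)
    have contG: "continuous_on {a..b} G" if "a \<ge> T1" for a b
      unfolding G_def
      by (intro continuous_on_real_sqrt continuous_on_diff continuous_on_const continuous_on_subset[OF contF])
         (use that T1p in auto)
    have contth: "continuous_on {a..b} (\<lambda>s. theta s j)" if "a \<ge> T1" for a b
      by (rule continuous_on_subset[OF cth[OF j]]) (use that T1p in auto)
    define up where "up t = theta t j + c * G t" for t
    define dn where "dn t = - theta t j + c * G t" for t
    have up_mono: "up b \<le> up a" if "T1 \<le> a" "a \<le> b" for a b
    proof -
      have "- up a \<le> - up b"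
      proof (rule DERIV_nonneg_imp_increasing_open[OF that(2)])
        show "continuous_on {a..b} (\<lambda>t. - up t)" unfolding up_def
          by (intro continuous_on_minus continuous_on_add continuous_on_mult continuous_on_const contG contth that)
        fix x assume x: "a < x" "x < b"
        then have xT: "x > T1" using that by simp
        have x0: "0 < x" using xT T1p by simp
        have "((\<lambda>t. - up t) has_real_derivative - (vv x j + c * (inverse (sqrt (Finf - Ff x)) / 2 * (0 - 2 / real N * Ee x)))) (at x)"
          unfolding up_def by (intro DERIV_minus DERIV_add DERIV_cmult dG[OF xT] dth[OF j, of x] x0)
        then have "((\<lambda>t. - up t) has_real_derivative - (vv x j + c * (- (Ee x / (real N * G x))))) (at x)"
          by (simp only: dG')
        moreover have "- (vv x j + c * (- (Ee x / (real N * G x)))) \<ge> 0"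
          using vb[OF xT] by (simp add: abs_le_iff)
        ultimately show "\<exists>y. ((\<lambda>t. - up t) has_real_derivative y) (at x) \<and> 0 \<le> y" by blast
      qed
      then show ?thesis by simp
    qed
    have dn_mono: "dn b \<le> dn a" if "T1 \<le> a" "a \<le> b" for a b
    proof -
      have "- dn a \<le> - dn b"
      proof (rule DERIV_nonneg_imp_increasing_open[OF that(2)])
        show "continuous_on {a..b} (\<lambda>t. - dn t)" unfolding dn_def
          by (intro continuous_on_minus continuous_on_add continuous_on_mult continuous_on_const contG contth that)
        fix x assume x: "a < x" "x < b"
        then have xT: "x > T1" using that by simp
        have x0: "0 < x" using xT T1p by simp
        have "((\<lambda>t. - dn t) has_real_derivative - (- vv x j + c * (inverse (sqrt (Finf - Ff x)) / 2 * (0 - 2 / real N * Ee x)))) (at x)"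
          unfolding dn_def by (intro DERIV_minus DERIV_add DERIV_cmult dG[OF xT] DERIV_minus[OF dth[OF j, of x]] x0)
        then have "((\<lambda>t. - dn t) has_real_derivative - (- vv x j + c * (- (Ee x / (real N * G x))))) (at x)"
          by (simp only: dG')
        moreover have "- (- vv x j + c * (- (Ee x / (real N * G x)))) \<ge> 0"
          using vb[OF xT] by (simp add: abs_le_iff)
        ultimately show "\<exists>y. ((\<lambda>t. - dn t) has_real_derivative y) (at x) \<and> 0 \<le> y" by blast
      qed
      then show ?thesis by simp
    qed
    have c0: "c \<ge> 0" using K N0 by (simp add: c_def)
    have G0: "G t \<ge> 0" if "t \<ge> T1" for t using Gpos[OF that] by simp
    have bd: "- up t \<le> - theta T1 j + c * G T1" if "T1 \<le> t" for t
    proof -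
      have "dn t \<le> dn T1" using dn_mono[OF order_refl that] .
      moreover have "c * G t \<ge> 0" using c0 G0[OF that] by simp
      ultimately show ?thesis unfolding up_def dn_def by linarith
    qed
    have lim1: "((\<lambda>t. - up t) \<longlongrightarrow> (SUP t\<in>{T1..}. - up t)) at_top"
      by (rule mono_bdd_tendsto[OF _ bd]) (use up_mono in auto)
    have "((\<lambda>t. Finf - Ff t) \<longlongrightarrow> Finf - Finf) at_top" by (intro tendsto_intros F_tend)
    then have "(G \<longlongrightarrow> sqrt (Finf - Finf)) at_top" unfolding G_def by (rule tendsto_real_sqrt)
    then have limG: "(G \<longlongrightarrow> 0) at_top" by simp
    have "((\<lambda>t. - (- up t) - c * G t) \<longlongrightarrow> - (SUP t\<in>{T1..}. - up t) - c * 0) at_top"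
      by (intro tendsto_intros lim1 limG)
    then have "((\<lambda>t. theta t j) \<longlongrightarrow> - (SUP t\<in>{T1..}. - up t) - c * 0) at_top"
      by (simp add: up_def)
    then show ?thesis by blast
  qed
qed

end

context kur2 begin

definition "ts j = Lim at_top (\<lambda>t. theta t j)"

lemma ts_lim: "j < N \<Longrightarrow> ((\<lambda>t. theta t j) \<longlongrightarrow> ts j) at_top"
proof -
  assume j: "j < N"
  from conv[OF j] obtain L where L: "((\<lambda>t. theta t j) \<longlongrightarrow> L) at_top" by blast
  then have "ts j = L" unfolding ts_def by (intro tendsto_Lim) auto
  with L show ?thesis by simp
qed

lemma vv_lim: "j < N \<Longrightarrow> ((\<lambda>t. vv t j) \<longlongrightarrow> kuramoto_rhs N ts j) at_top"
  unfolding kuramoto_rhs_def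
  by (intro tendsto_mult tendsto_const tendsto_sum tendsto_sin tendsto_diff ts_lim) auto

lemma rhs0: assumes j: "j < N" shows "kuramoto_rhs N ts j = 0"
proof (rule ccontr)
  define w where "w = kuramoto_rhs N ts j"
  assume "kuramoto_rhs N ts j \<noteq> 0"
  then have w: "\<bar>w\<bar> > 0" by (simp add: w_def)
  have e1: "\<forall>\<^sub>F t in at_top. dist (vv t j) w < \<bar>w\<bar> / 2"
    using tendstoD[OF vv_lim[OF j], of "\<bar>w\<bar> / 2"] w by (simp add: w_def)
  have e2: "\<forall>\<^sub>F t in at_top. dist (theta t j) (ts j) < \<bar>w\<bar> / 4"
    using tendstoD[OF ts_lim[OF j], of "\<bar>w\<bar> / 4"] w by simp
  have "\<forall>\<^sub>F t in at_top. dist (vv t j) w < \<bar>w\<bar> / 2 \<and> dist (theta t j) (ts j) < \<bar>w\<bar> / 4 \<and> t \<ge> 1"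
    by (intro eventually_conj e1 e2 eventually_ge_at_top)
  then obtain t0 where t0: "\<And>t. t \<ge> t0 \<Longrightarrow> dist (vv t j) w < \<bar>w\<bar> / 2 \<and> dist (theta t j) (ts j) < \<bar>w\<bar> / 4 \<and> t \<ge> 1"
    unfolding eventually_at_top_linorder by blast
  have t0p: "t0 \<ge> 1" using t0[of t0] by simp
  have "\<exists>l z. t0 < z \<and> z < t0 + 1 \<and> DERIV (\<lambda>s. theta s j) z :> l \<and> theta (t0 + 1) j - theta t0 j = (t0 + 1 - t0) * l"
  proof (rule MVT)
    show "continuous_on {t0..t0 + 1} (\<lambda>s. theta s j)"
      by (rule continuous_on_subset[OF cth[OF j]]) (use t0p in auto)
    fix x assume "t0 < x" "x < t0 + 1"
    then show "(\<lambda>s. theta s j) differentiable (at x)"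
      using dth[OF j, of x] t0p real_differentiable_def by auto
  qed simp
  then obtain l z where z: "t0 < z" "z < t0 + 1" "DERIV (\<lambda>s. theta s j) z :> l"
    and diff: "theta (t0 + 1) j - theta t0 j = l" by auto
  have "l = vv z j" using DERIV_unique[OF z(3) dth[OF j, of z]] z t0p by simp
  moreover have "dist (vv z j) w < \<bar>w\<bar> / 2" using t0[of z] z by simp
  moreover have "dist (theta (t0 + 1) j) (ts j) < \<bar>w\<bar> / 4" "dist (theta t0 j) (ts j) < \<bar>w\<bar> / 4"
    using t0[of "t0 + 1"] t0[of t0] by auto
  ultimately show False using diff by (simp add: dist_real_def abs_if split: if_splits)
qed

lemma Ff_lim: "(Ff \<longlongrightarrow> (cC N ts)^2 + (sS N ts)^2) at_top"
  unfolding cC_def sS_def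
  by (intro tendsto_add tendsto_power tendsto_divide tendsto_const tendsto_sum tendsto_cos tendsto_sin ts_lim) (use N2 in auto)

lemma Finf_eq: "Finf = (cC N ts)^2 + (sS N ts)^2"
  using tendsto_unique[OF _ F_tend Ff_lim] by simp

lemma Finf_pos: "Finf > 0"
  using F_le_inf[of T0] T0 by simp


lemma polar: obtains phi where "cC N ts = sqrt Finf * cos phi" "sS N ts = sqrt Finf * sin phi"
proof -
  define R where "R = sqrt Finf"
  have R: "R > 0" using Finf_pos by (simp add: R_def)
  have RR: "R^2 = Finf" using Finf_pos by (simp add: R_def)
  have "(cC N ts / R)^2 + (sS N ts / R)^2 = ((cC N ts)^2 + (sS N ts)^2) / R^2"
    by (simp add: power_divide add_divide_distrib)
  also have "\<dots> = 1"
  proof -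
    have nz: "(cC N ts)^2 + (sS N ts)^2 \<noteq> 0" using Finf_pos Finf_eq by (metis less_irrefl)
    have e: "R^2 = (cC N ts)^2 + (sS N ts)^2" using RR Finf_eq by simp
    show ?thesis by (simp only: e divide_self[OF nz])
  qed
  finally have "(cC N ts / R)^2 + (sS N ts / R)^2 = 1" .
  then obtain p where "cC N ts / R = cos p" "sS N ts / R = sin p" by (rule sincos_total_2pi)
  then have "cC N ts = R * cos p" "sS N ts = R * sin p" using R by (simp_all add: field_simps)
  then show ?thesis using that[of p] by (simp add: R_def)
qed

lemma cong_cos1: "cong_2pi a p \<Longrightarrow> cos (a - p) = 1"
  unfolding cong_2pi_def by auto

lemma cong_cos2: "cong_2pi a (p + pi) \<Longrightarrow> cos (a - p) = -1"
proof -
  assume "cong_2pi a (p + pi)"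
  then obtain m :: int where m: "a - (p + pi) = 2 * pi * of_int m" unfolding cong_2pi_def by blast
  then have "a - p = 2 * pi * of_int m + pi" by simp
  then show ?thesis by simp
qed

lemma dichot:
  assumes pc: "cC N ts = sqrt Finf * cos phi" and ps: "sS N ts = sqrt Finf * sin phi" and j: "j < N"
  shows "cong_2pi (ts j) phi \<or> cong_2pi (ts j) (phi + pi)"
proof -
  have R: "sqrt Finf > 0" using Finf_pos by simp
  have "0 = sS N ts * cos (ts j) - cC N ts * sin (ts j)" using rhs0[OF j] by (simp add: rhs_eq)
  also have "\<dots> = sqrt Finf * sin (phi - ts j)" by (simp add: pc ps sin_diff algebra_simps)
  finally have "sin (phi - ts j) = 0" using R by simp
  then have "sin (ts j - phi) = 0" by (metis minus_diff_eq sin_minus neg_equal_0_iff_equal)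
  then obtain m :: int where m: "ts j - phi = of_int m * pi" by (auto simp: sin_zero_iff_int2)
  show ?thesis
  proof (cases "even m")
    case True
    then obtain n where "m = 2 * n" by (rule evenE)
    then have "ts j - phi = 2 * pi * of_int n" using m by simp
    then show ?thesis unfolding cong_2pi_def by blast
  next
    case False
    then obtain n where "m = 2 * n + 1" by (rule oddE)
    then have "ts j - (phi + pi) = 2 * pi * of_int n" using m by (simp add: algebra_simps)
    then show ?thesis unfolding cong_2pi_def by blast
  qed
qed

lemma config:
  assumes pc: "cC N ts = sqrt Finf * cos phi" and ps: "sS N ts = sqrt Finf * sin phi"
  defines "I \<equiv> {j. j < N \<and> cong_2pi (ts j) phi}"
  shows "2 * (N - card I) < N" "card I \<le> N" "\<forall>j\<in>{..<N} - I. cong_2pi (ts j) (phi + pi)"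
proof -
  define R where "R = sqrt Finf"
  have R: "R > 0" using Finf_pos by (simp add: R_def)
  have RR: "R^2 = Finf" using Finf_pos by (simp add: R_def)
  have Isub: "I \<subseteq> {..<N}" by (auto simp: I_def)
  show cI: "card I \<le> N" using card_mono[OF _ Isub] by simp
  show rest: "\<forall>j\<in>{..<N} - I. cong_2pi (ts j) (phi + pi)"
    using dichot[OF pc ps] by (auto simp: I_def)
  have g: "cC N ts * cos (ts j) + sS N ts * sin (ts j) = R * cos (ts j - phi)" for j
    by (simp add: pc ps R_def cos_diff algebra_simps)
  have "real N * Finf = (\<Sum>j<N. cC N ts * cos (ts j) + sS N ts * sin (ts j))"
    using sum_g[of N ts] N2 Finf_eq by simp
  also have "\<dots> = (\<Sum>j<N. R * cos (ts j - phi))" using g by simp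
  also have "\<dots> = (\<Sum>j\<in>I. R * cos (ts j - phi)) + (\<Sum>j\<in>{..<N} - I. R * cos (ts j - phi))"
    using Isub by (metis add.commute finite_lessThan sum.subset_diff)
  also have "(\<Sum>j\<in>I. R * cos (ts j - phi)) = (\<Sum>j\<in>I. R)"
    by (intro sum.cong refl) (simp add: I_def cong_cos1)
  also have "(\<Sum>j\<in>{..<N} - I. R * cos (ts j - phi)) = (\<Sum>j\<in>{..<N} - I. - R)"
    by (intro sum.cong refl) (use rest cong_cos2 in simp)
  finally have "real N * Finf = R * (real (card I) - real (card ({..<N} - I)))"
    by (simp add: algebra_simps)
  moreover have "card ({..<N} - I) = N - card I"
    using Isub finite_subset[OF Isub] by (simp add: card_Diff_subset)
  moreover have "real (N - card I) = real N - real (card I)" using cI by (simp add: of_nat_diff)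
  ultimately have "real N * R^2 = R * (2 * real (card I) - real N)" using RR by simp
  then have "real N * R = 2 * real (card I) - real N" using R by (simp add: power2_eq_square)
  moreover have "real N * R > 0" using R N2 by simp
  ultimately have "2 * real (card I) > real N" by linarith
  then show "2 * (N - card I) < N" using cI by linarith
qed

end

lemma poly_id:
  fixes a b c d C S :: real
  assumes "a^2 + b^2 = 1" "c^2 + d^2 = 1"
  shows "(a*c+b*d)/2*((S*(a^2-b^2) - C*(2*b*a)) - (S*(c^2-d^2) - C*(2*d*c))) = -((C*(a^2-b^2)+S*(2*b*a)) + (C*(c^2-d^2)+S*(2*d*c)))/2 * (b*c - a*d)"
  using assms by algebra

lemma trig_id:
  fixes x y C S :: real
  shows "cos ((x - y) / 2) / 2 * ((S * cos x - C * sin x) - (S * cos y - C * sin y))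
       = - ((C * cos x + S * sin x) + (C * cos y + S * sin y)) / 2 * sin ((x - y) / 2)"
proof -
  define p where "p = x / 2"
  define q where "q = y / 2"
  have x: "x = 2 * p" and y: "y = 2 * q" by (simp_all add: p_def q_def)
  have h: "(x - y) / 2 = p - q" by (simp add: p_def q_def diff_divide_distrib)
  show ?thesis unfolding h unfolding x y cos_double sin_double cos_diff sin_diff
    by (rule poly_id) simp_all
qed

lemma sin_half_zero_iff: "sin ((a - b) / 2) = 0 \<longleftrightarrow> cong_2pi a b"
proof
  assume "sin ((a - b) / 2) = 0"
  then obtain m :: int where "(a - b) / 2 = of_int m * pi" by (auto simp: sin_zero_iff_int2)
  then have "a - b = 2 * pi * of_int m" by simp
  then show "cong_2pi a b" unfolding cong_2pi_def by blast
next
  assume "cong_2pi a b"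
  then obtain m :: int where "a - b = 2 * pi * of_int m" unfolding cong_2pi_def by blast
  then have "(a - b) / 2 = of_int m * pi" by simp
  then show "sin ((a - b) / 2) = 0" by (simp add: sin_zero_iff_int2)
qed

lemma cong_same: "cong_2pi a p \<Longrightarrow> cong_2pi b p \<Longrightarrow> cong_2pi a b"
proof -
  assume "cong_2pi a p" "cong_2pi b p"
  then obtain m n :: int where "a - p = 2 * pi * of_int m" "b - p = 2 * pi * of_int n" unfolding cong_2pi_def by blast
  then have "a - b = 2 * pi * of_int (m - n)" by (simp add: algebra_simps)
  then show ?thesis unfolding cong_2pi_def by blast
qed

lemma cong_opp: "cong_2pi a p \<Longrightarrow> cong_2pi b (p + pi) \<Longrightarrow> \<not> cong_2pi a b"
proof
  assume "cong_2pi a p" "cong_2pi b (p + pi)" "cong_2pi a b"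
  then obtain m n k :: int where mnk: "a - p = 2 * pi * of_int m" "b - (p + pi) = 2 * pi * of_int n"
    "a - b = 2 * pi * of_int k" unfolding cong_2pi_def by blast
  then have "pi * 1 = pi * (2 * of_int (m - n - k))" by (simp add: algebra_simps)
  then have "(1::real) = of_int (2 * (m - n - k))" by simp
  then have "(1::int) = 2 * (m - n - k)" by linarith
  then show False by presburger
qed

lemma gronwall0:
  fixes f h :: "real \<Rightarrow> real"
  assumes cont: "continuous_on {0..} f"
    and der: "\<And>t. 0 < t \<Longrightarrow> (f has_real_derivative - h t * f t) (at t)"
    and hb: "\<And>t. 0 < t \<Longrightarrow> \<bar>h t\<bar> \<le> 4" and f0: "f 0 = 0" and t: "0 \<le> t"
  shows "f t = 0"
proof -
  define V where "V s = - ((f s)^2 * exp (- (8 * s)))" for s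
  have dV: "(V has_real_derivative exp (- (8 * s)) * (f s)^2 * (2 * h s + 8)) (at s)" if "0 < s" for s
  proof -
    have "(V has_real_derivative - (of_nat 2 * ((- h s * f s) * f s ^ (2 - Suc 0)) * exp (- (8 * s))
           + exp (- (8 * s)) * (- (8 * 1)) * (f s)^2)) (at s)"
      unfolding V_def
      by (intro DERIV_minus DERIV_mult DERIV_power der that DERIV_fun_exp DERIV_cmult DERIV_ident)
    then show ?thesis by (simp add: algebra_simps power2_eq_square)
  qed
  have "V 0 \<le> V t"
  proof (rule deriv_mono[where f'="\<lambda>s. exp (- (8 * s)) * (f s)^2 * (2 * h s + 8)", OF _ t _ dV])
    show "continuous_on {0..} V" unfolding V_def
      by (intro continuous_on_minus continuous_on_mult continuous_on_power cont continuous_on_exp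
          continuous_on_const continuous_on_id)
    fix s :: real assume "0 < s"
    then have "2 * h s + 8 \<ge> 0" using hb[of s] by (simp add: abs_le_iff)
    then show "0 \<le> exp (- (8 * s)) * (f s)^2 * (2 * h s + 8)" by (intro mult_nonneg_nonneg) auto
  qed auto
  then have "(f t)^2 * exp (- (8 * t)) \<le> 0" using f0 by (simp add: V_def)
  then have "(f t)^2 \<le> 0" by (simp add: mult_le_0_iff)
  then show ?thesis by simp
qed

context kur begin

abbreviation "gg t a \<equiv> Ct t * cos (theta t a) + St t * sin (theta t a)"

lemma gg_bnd: "\<bar>gg t a\<bar> \<le> 2"
proof -
  have "\<bar>gg t a\<bar> \<le> \<bar>Ct t\<bar> * \<bar>cos (theta t a)\<bar> + \<bar>St t\<bar> * \<bar>sin (theta t a)\<bar>"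
    by (metis abs_mult abs_triangle_ineq)
  also have "\<dots> \<le> 1 * 1 + 1 * 1"
    by (intro add_mono mult_mono abs_cC abs_sS abs_cos_le_one abs_sin_le_one) auto
  finally show ?thesis by simp
qed

lemma dL: assumes a: "a < N" and b: "b < N" and t: "0 < t"
  shows "((\<lambda>s. sin ((theta s a - theta s b) / 2)) has_real_derivative
           - (gg t a + gg t b) / 2 * sin ((theta t a - theta t b) / 2)) (at t)"
proof -
  have "((\<lambda>s. sin ((theta s a - theta s b) / 2)) has_real_derivative
           cos ((theta t a - theta t b) / 2) * ((vv t a - vv t b) / 2)) (at t)"
    by (intro DERIV_fun_sin DERIV_cdivide DERIV_diff dth a b t)
  moreover have "cos ((theta t a - theta t b) / 2) * ((vv t a - vv t b) / 2)
      = - (gg t a + gg t b) / 2 * sin ((theta t a - theta t b) / 2)"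
    using trig_id[of "theta t a" "theta t b" "St t" "Ct t"] by (simp add: rhs_eq)
  ultimately show ?thesis by simp
qed

lemma contL: "a < N \<Longrightarrow> b < N \<Longrightarrow> continuous_on {0..} (\<lambda>s. sin ((theta s a - theta s b) / 2))"
  by (intro continuous_on_sin continuous_on_divide continuous_on_diff cth continuous_on_const) auto

lemma cross:
  assumes i1: "i1 < N" and i2: "i2 < N" and j1: "j1 < N" and j2: "j2 < N" and t: "0 \<le> t"
  defines "P \<equiv> \<lambda>s. sin ((theta s i1 - theta s i2) / 2) * sin ((theta s j1 - theta s j2) / 2)"
  defines "M \<equiv> \<lambda>s. sin ((theta s i1 - theta s j1) / 2) * sin ((theta s i2 - theta s j2) / 2)"
  shows "P t * M 0 = M t * P 0"
proof -
  define hh where "hh s = (gg s i1 + gg s i2 + gg s j1 + gg s j2) / 2" for s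
  define W where "W s = P s * M 0 - M s * P 0" for s
  have dP: "(P has_real_derivative - hh s * P s) (at s)" if "0 < s" for s
  proof -
    have "(P has_real_derivative
       sin ((theta s i1 - theta s i2) / 2) * (- (gg s j1 + gg s j2) / 2 * sin ((theta s j1 - theta s j2) / 2))
       + (- (gg s i1 + gg s i2) / 2 * sin ((theta s i1 - theta s i2) / 2)) * sin ((theta s j1 - theta s j2) / 2)) (at s)"
      unfolding P_def by (intro DERIV_mult' dL i1 i2 j1 j2 that)
    moreover have "sin ((theta s i1 - theta s i2) / 2) * (- (gg s j1 + gg s j2) / 2 * sin ((theta s j1 - theta s j2) / 2))
       + (- (gg s i1 + gg s i2) / 2 * sin ((theta s i1 - theta s i2) / 2)) * sin ((theta s j1 - theta s j2) / 2) = - hh s * P s"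
      unfolding hh_def P_def by algebra
    ultimately show ?thesis by simp
  qed
  have dM: "(M has_real_derivative - hh s * M s) (at s)" if "0 < s" for s
  proof -
    have "(M has_real_derivative
       sin ((theta s i1 - theta s j1) / 2) * (- (gg s i2 + gg s j2) / 2 * sin ((theta s i2 - theta s j2) / 2))
       + (- (gg s i1 + gg s j1) / 2 * sin ((theta s i1 - theta s j1) / 2)) * sin ((theta s i2 - theta s j2) / 2)) (at s)"
      unfolding M_def by (intro DERIV_mult' dL i1 i2 j1 j2 that)
    moreover have "sin ((theta s i1 - theta s j1) / 2) * (- (gg s i2 + gg s j2) / 2 * sin ((theta s i2 - theta s j2) / 2))
       + (- (gg s i1 + gg s j1) / 2 * sin ((theta s i1 - theta s j1) / 2)) * sin ((theta s i2 - theta s j2) / 2) = - hh s * M s"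
      unfolding hh_def M_def by algebra
    ultimately show ?thesis by simp
  qed
  have "W t = 0"
  proof (rule gronwall0[where h=hh, OF _ _ _ _ t])
    show "continuous_on {0..} W" unfolding W_def P_def M_def
      by (intro continuous_on_diff continuous_on_mult continuous_on_const contL i1 i2 j1 j2)
    fix s :: real assume s: "0 < s"
    have "(W has_real_derivative - hh s * P s * M 0 - (- hh s * M s * P 0)) (at s)"
      unfolding W_def by (intro DERIV_diff DERIV_cmult_right dP dM s)
    then show "(W has_real_derivative - hh s * W s) (at s)" by (simp add: W_def algebra_simps)
    show "\<bar>hh s\<bar> \<le> 4" unfolding hh_def
      using gg_bnd[of s i1] gg_bnd[of s i2] gg_bnd[of s j1] gg_bnd[of s j2] by (simp add: abs_le_iff)
  next
    show "W 0 = 0" by (simp add: W_def)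
  qed
  then show ?thesis by (simp add: W_def)
qed

end

lemma two_elems: assumes "2 \<le> card A" shows "\<exists>a b. a \<in> A \<and> b \<in> A \<and> a \<noteq> b"
proof (rule ccontr)
  assume no: "\<not> ?thesis"
  have "A \<noteq> {}" using assms by auto
  then obtain a where a: "a \<in> A" by blast
  then have "A \<subseteq> {a}" using no by blast
  then have "card A \<le> card {a}" by (intro card_mono) auto
  with assms show False by simp
qed

context kur2 begin

lemma kle1:
  assumes pc: "cC N ts = sqrt Finf * cos phi" and ps: "sS N ts = sqrt Finf * sin phi"
    and dist: "\<forall>i<N. \<forall>j<N. i \<noteq> j \<longrightarrow> \<not> cong_2pi (theta 0 i) (theta 0 j)"
  shows "N - card {j. j < N \<and> cong_2pi (ts j) phi} \<le> 1"
proof (rule ccontr)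
  define I where "I = {j. j < N \<and> cong_2pi (ts j) phi}"
  assume "\<not> N - card {j. j < N \<and> cong_2pi (ts j) phi} \<le> 1"
  then have k2: "N - card I \<ge> 2" by (simp add: I_def)
  have c1: "2 * (N - card I) < N" and c2: "card I \<le> N" and c3: "\<forall>j\<in>{..<N} - I. cong_2pi (ts j) (phi + pi)"
    using config[OF pc ps] by (simp_all add: I_def)
  have Isub: "I \<subseteq> {..<N}" by (auto simp: I_def)
  have "card ({..<N} - I) = N - card I" using Isub finite_subset[OF Isub] by (simp add: card_Diff_subset)
  then have cr: "2 \<le> card ({..<N} - I)" using k2 by simp
  have cI: "2 \<le> card I" using c1 c2 k2 by linarith
  obtain i1 i2 where i: "i1 \<in> I" "i2 \<in> I" "i1 \<noteq> i2" using two_elems[OF cI] by blast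
  obtain j1 j2 where jj: "j1 \<in> {..<N} - I" "j2 \<in> {..<N} - I" "j1 \<noteq> j2" using two_elems[OF cr] by blast
  have lt: "i1 < N" "i2 < N" "j1 < N" "j2 < N" using i jj by (auto simp: I_def)
  have ci: "cong_2pi (ts i1) phi" "cong_2pi (ts i2) phi" using i by (auto simp: I_def)
  have cj: "cong_2pi (ts j1) (phi + pi)" "cong_2pi (ts j2) (phi + pi)" using jj c3 by auto
  define P where "P = (\<lambda>s. sin ((theta s i1 - theta s i2) / 2) * sin ((theta s j1 - theta s j2) / 2))"
  define M where "M = (\<lambda>s. sin ((theta s i1 - theta s j1) / 2) * sin ((theta s i2 - theta s j2) / 2))"
  have eq: "P t * M 0 = M t * P 0" if "0 \<le> t" for t
    unfolding P_def M_def by (rule cross[OF lt that])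
  have P0: "P 0 \<noteq> 0"
    using dist lt i(3) jj(3) by (simp add: P_def sin_half_zero_iff)
  have limP: "(P \<longlongrightarrow> sin ((ts i1 - ts i2) / 2) * sin ((ts j1 - ts j2) / 2)) at_top"
    unfolding P_def by (intro tendsto_mult tendsto_sin tendsto_divide tendsto_diff tendsto_const ts_lim lt) auto
  have limM: "(M \<longlongrightarrow> sin ((ts i1 - ts j1) / 2) * sin ((ts i2 - ts j2) / 2)) at_top"
    unfolding M_def by (intro tendsto_mult tendsto_sin tendsto_divide tendsto_diff tendsto_const ts_lim lt) auto
  have Pinf: "sin ((ts i1 - ts i2) / 2) = 0" using cong_same[OF ci] by (simp add: sin_half_zero_iff)
  have Minf: "sin ((ts i1 - ts j1) / 2) * sin ((ts i2 - ts j2) / 2) \<noteq> 0"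
    using cong_opp[OF ci(1) cj(1)] cong_opp[OF ci(2) cj(2)] by (simp add: sin_half_zero_iff)
  have l1: "((\<lambda>t. P t * M 0) \<longlongrightarrow> 0) at_top"
    using tendsto_mult[OF limP tendsto_const[of "M 0"]] Pinf by simp
  have l2: "((\<lambda>t. M t * P 0) \<longlongrightarrow> (sin ((ts i1 - ts j1) / 2) * sin ((ts i2 - ts j2) / 2)) * P 0) at_top"
    by (rule tendsto_mult[OF limM tendsto_const])
  have "((\<lambda>t. M t * P 0) \<longlongrightarrow> 0) at_top"
    by (rule Lim_transform_eventually[OF l1]) (rule eventually_mono[OF eventually_ge_at_top[of 0]], rule eq)
  from tendsto_unique[OF _ l2 this] have "(sin ((ts i1 - ts j1) / 2) * sin ((ts i2 - ts j2) / 2)) * P 0 = 0"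
    by simp
  with Minf P0 show False by simp
qed

end

theorem theorem2p4:
  fixes N :: nat and theta :: "real \<Rightarrow> nat \<Rightarrow> real"
  assumes "N \<ge> 2"
    and "is_solution N theta"
    and "\<not> is_stationary_solution N theta"
  shows "\<exists>theta_star :: nat \<Rightarrow> real.
           (\<forall>j<N. ((\<lambda>t. theta t j) \<longlongrightarrow> theta_star j) at_top) \<and>
           (\<forall>i<N. kuramoto_rhs N theta_star i = 0) \<and>
           (\<exists>k::nat. 2 * k < N \<and> config_type N k theta_star \<and>
              ((\<forall>i<N. \<forall>j<N. i \<noteq> j \<longrightarrow> \<not> cong_2pi (theta 0 i) (theta 0 j))
                 \<longrightarrow> k \<le> 1))"
proof -
  interpret kur2 N theta
    by unfold_locales (use assms in auto)
  obtain phi where pc: "cC N ts = sqrt Finf * cos phi" and ps: "sS N ts = sqrt Finf * sin phi"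
    by (rule polar)
  define I where "I = {j. j < N \<and> cong_2pi (ts j) phi}"
  define k where "k = N - card I"
  have c1: "2 * k < N" and c2: "card I \<le> N" and c3: "\<forall>j\<in>{..<N} - I. cong_2pi (ts j) (phi + pi)"
    using config[OF pc ps] by (simp_all add: I_def k_def)
  have ct: "config_type N k ts"
    unfolding config_type_def
  proof (intro exI conjI)
    show "I \<subseteq> {..<N}" by (auto simp: I_def)
    show "card I = N - k" using c2 by (simp add: k_def)
    show "\<forall>i\<in>I. cong_2pi (ts i) phi" by (simp add: I_def)
    show "\<forall>i\<in>{..<N} - I. cong_2pi (ts i) (phi + pi)" by (rule c3)
  qed
  have kk: "(\<forall>i<N. \<forall>j<N. i \<noteq> j \<longrightarrow> \<not> cong_2pi (theta 0 i) (theta 0 j)) \<longrightarrow> k \<le> 1"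
    using kle1[OF pc ps] by (simp add: k_def I_def)
  show ?thesis
    using ts_lim rhs0 c1 ct kk by blast
qed


end
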